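(* Let $n=2^s$, $q=2^r$ ($s,r$ positive integers). The map $\mathbb{F}_q\to C^{\perp}(SL(n,q))$, $a\mapsto c(a)=(tr(a\,Tr(g_1)),\dots,tr(a\,Tr(g_N)))$, is an $\mathbb{F}_2$-linear isomorphism.
   Context: $\mathbb{F}_q$ is the field with $q$ elements and $tr:\mathbb{F}_q\to\mathbb{F}_2$ the absolute trace. $N=|SL(n,q)|$, $g_1,\dots,g_N$ is a fixed ordering of $SL(n,q)$, $Tr$ is the matrix trace, $v=(Tr(g_1),\dots,Tr(g_N))\in\mathbb{F}_q^N$, $C(SL(n,q))=\{u\in\mathbb{F}_2^N:u\cdot v=0\}$ (dot product in $\mathbb{F}_q$), and $C^\perp(SL(n,q))$ is its dual in $\mathbb{F}_2^N$ under the standard inner product. *)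

theory Defs
  imports "HOL-Analysis.Analysis" "HOL-Library.Z2"
begin

text \<open>F_2 is modelled by the two-element field bit; F_2 is embedded in any ring via of_bit.\<close>

text \<open>Absolute trace F_q -> F_2 for q = 2^r: tr x = x + x^2 + ... + x^(2^(r-1)), which lies in {0,1}.\<close>
definition abs_tr :: "nat \<Rightarrow> 'a::field \<Rightarrow> bit" where
  "abs_tr r x = (if (\<Sum>i<r. x ^ (2 ^ i)) = 0 then 0 else 1)"

definition SL :: "('a::field ^'n^'n) set" where
  "SL = {g. det g = 1}"

text \<open>Binary words of length N = |SL(n,q)| are functions on SL(n,q) (coordinates indexed
  by the group elements themselves), vanishing outside SL(n,q).\<close>
definition words :: "(('a::field ^'n^'n) \<Rightarrow> bit) set" where
  "words = {u. \<forall>g. g \<notin> SL \<longrightarrow> u g = 0}"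

definition code_C :: "(('a::field ^'n^'n) \<Rightarrow> bit) set" where
  "code_C = {u \<in> words. (\<Sum>g\<in>SL. of_bit (u g) * trace g) = (0::'a)}"

definition code_C_perp :: "(('a::field ^'n^'n) \<Rightarrow> bit) set" where
  "code_C_perp = {w \<in> words. \<forall>u \<in> (code_C :: (('a ^'n^'n) \<Rightarrow> bit) set).
                    (\<Sum>g\<in>SL. u g * w g) = 0}"

definition cmap :: "nat \<Rightarrow> 'a::field \<Rightarrow> (('a ^'n^'n) \<Rightarrow> bit)" where
  "cmap r a = (\<lambda>g. if g \<in> SL then abs_tr r (a * trace g) else 0)"

end

theory Submission imports Defs "HOL-Computational_Algebra.Polynomial" begin

lemma char2:
  assumes "CARD('a::{field,finite}) = 2 ^ r" "r > 0"
  shows "(1::'a) + 1 = 0"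
proof -
  have "(\<Sum>y\<in>UNIV. y + (1::'a)) = (\<Sum>y\<in>UNIV. y)"
    by (rule sum.reindex_bij_witness[where i="\<lambda>y. y - 1" and j="\<lambda>y. y + 1"]) auto
  hence "of_nat CARD('a) = (0::'a)" by (simp add: sum.distrib)
  hence "(2::'a) ^ r = 0" using assms by simp
  hence "(2::'a) = 0" by simp
  thus ?thesis by simp
qed

lemma frob_fix:
  assumes "CARD('a::{field,finite}) = 2 ^ r" "r > 0"
  shows "(x::'a) ^ (2^r) = x"
proof (cases "x = 0")
  case True thus ?thesis by simp
next
  case False
  let ?S = "UNIV - {0::'a}"
  have "(\<Prod>y\<in>?S. x * y) = (\<Prod>y\<in>?S. y)"
    by (rule prod.reindex_bij_witness[where i="\<lambda>y. y / x" and j="\<lambda>y. x * y"]) (use False in auto)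
  moreover have "(\<Prod>y\<in>?S. x * y) = x ^ card ?S * (\<Prod>y\<in>?S. y)"
    by (simp add: prod.distrib)
  moreover have "(\<Prod>y\<in>?S. y) \<noteq> 0" by simp
  ultimately have "x ^ card ?S = 1" by simp
  moreover have "card ?S = 2^r - 1" using assms by (simp add: card_Diff_subset)
  ultimately have "x ^ (2^r - 1) = 1" by simp
  hence "x ^ (2^r - 1) * x = x" by simp
  moreover have "2^r - 1 + 1 = (2::nat)^r" by simp
  ultimately show ?thesis by (metis power_add power_one_right)
qed

definition TT :: "nat \<Rightarrow> 'a::field \<Rightarrow> 'a" where "TT r x = (\<Sum>i<r. x ^ (2 ^ i))"

lemma sq_add_char2:
  assumes "(1::'a::field) + 1 = 0"
  shows "((x::'a) + y)^2 = x^2 + y^2"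
proof -
  have "((x::'a) + y)^2 = x^2 + y^2 + (1+1)*x*y" by (simp add: power2_eq_square algebra_simps)
  thus ?thesis using assms by simp
qed

lemma pow2_add_char2:
  assumes "(1::'a::field) + 1 = 0"
  shows "((x::'a) + y)^(2^i) = x^(2^i) + y^(2^i)"
proof (induction i)
  case 0 thus ?case by simp
next
  case (Suc i)
  have "(x+y)^(2^Suc i) = ((x+y)^(2^i))^2" by (simp add: power_mult[symmetric] mult.commute)
  also have "\<dots> = (x^(2^i) + y^(2^i))^2" using Suc by simp
  also have "\<dots> = (x^(2^i))^2 + (y^(2^i))^2" by (rule sq_add_char2[OF assms])
  also have "\<dots> = x^(2^Suc i) + y^(2^Suc i)" by (simp add: power_mult[symmetric] mult.commute)
  finally show ?case .
qed

lemma sq_sum_char2: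
  assumes "(1::'a::field) + 1 = 0"
  fixes n :: nat
  shows "(\<Sum>i<n. (f i::'a))^2 = (\<Sum>i<n. (f i)^2)"
  by (induction n) (simp_all add: sq_add_char2[OF assms])

lemma TT_add:
  assumes "(1::'a::field) + 1 = 0"
  shows "TT r ((x::'a) + y) = TT r x + TT r y"
  unfolding TT_def by (simp add: pow2_add_char2[OF assms] sum.distrib)

lemma TT_idem:
  assumes "CARD('a::{field,finite}) = 2 ^ r" "r > 0"
  shows "(TT r (x::'a))^2 = TT r x"
proof -
  have c: "(1::'a) + 1 = 0" by (rule char2[OF assms])
  have "(TT r x)^2 = (\<Sum>i<r. x^(2^Suc i))"
    unfolding TT_def sq_sum_char2[OF c] by (simp add: power_mult[symmetric] mult.commute)
  moreover have "(\<Sum>i<Suc r. x^(2^i)) = x^(2^0) + (\<Sum>i<r. x^(2^Suc i))"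
    by (rule sum.lessThan_Suc_shift)
  moreover have "(\<Sum>i<Suc r. x^(2^i)) = TT r x + x^(2^r)" by (simp add: TT_def)
  moreover have "x^(2^r) = x" by (rule frob_fix[OF assms])
  ultimately show ?thesis by simp
qed

lemma TT_01:
  assumes "CARD('a::{field,finite}) = 2 ^ r" "r > 0"
  shows "TT r (x::'a) = 0 \<or> TT r x = 1"
proof -
  have "TT r x * (TT r x - 1) = 0" using TT_idem[OF assms, of x]
    by (simp add: power2_eq_square algebra_simps)
  thus ?thesis by simp
qed

lemma of_bit_abs_tr:
  assumes "CARD('a::{field,finite}) = 2 ^ r" "r > 0"
  shows "of_bit (abs_tr r (x::'a)) = TT r x"
  using TT_01[OF assms, of x] by (auto simp: abs_tr_def TT_def)

lemma of_bit_add_char2: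
  assumes "(1::'a::field) + 1 = 0"
  shows "(of_bit (b + c) :: 'a) = of_bit b + of_bit c"
  using assms by (cases b; cases c) auto

lemma of_bit_inj:
  "(of_bit b :: 'a::field) = of_bit c \<Longrightarrow> b = c"
  by (cases b; cases c) auto

lemma abs_tr_add:
  assumes "CARD('a::{field,finite}) = 2 ^ r" "r > 0"
  shows "abs_tr r ((x::'a) + y) = abs_tr r x + abs_tr r y"
proof -
  have c: "(1::'a) + 1 = 0" by (rule char2[OF assms])
  have "(of_bit (abs_tr r (x+y))::'a) = of_bit (abs_tr r x + abs_tr r y)"
    by (simp only: of_bit_add_char2[OF c] of_bit_abs_tr[OF assms] TT_add[OF c])
  thus ?thesis by (rule of_bit_inj)
qed

lemma abs_tr_0: "r > 0 \<Longrightarrow> abs_tr r (0::'a::field) = 0"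
  by (simp add: abs_tr_def zero_power)

lemma abs_tr_scal:
  assumes "r > 0"
  shows "abs_tr r (of_bit k * (x::'a::field)) = k * abs_tr r x"
  using assms by (cases k) (auto simp: abs_tr_0)

lemma abs_tr_nonzero:
  assumes "CARD('a::{field,finite}) = 2 ^ r" "r > 0"
  shows "\<exists>z::'a. abs_tr r z = 1"
proof (rule ccontr)
  assume "\<not> ?thesis"
  hence z: "\<And>z::'a. TT r z = 0" by (auto simp: abs_tr_def TT_def split: if_splits)
  define p :: "'a poly" where "p = (\<Sum>i<r. monom 1 (2^i))"
  have pe: "poly p x = TT r x" for x by (simp add: p_def TT_def poly_sum poly_monom)
  have "coeff p (2^(r-1)) = (\<Sum>i<r. if 2^i = (2::nat)^(r-1) then 1 else 0)"
    by (simp add: p_def coeff_sum coeff_monom)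
  also have "\<dots> = (\<Sum>i\<in>{r-1}. 1)"
    by (rule sum.mono_neutral_cong_right) (use assms in auto)
  finally have "coeff p (2^(r-1)) = 1" by simp
  hence pn: "p \<noteq> 0" by auto
  have d1: "degree p \<le> 2^(r-1)" unfolding p_def
  proof (rule degree_sum_le)
    fix i assume "i \<in> {..<r}"
    hence "(2::nat)^i \<le> 2^(r-1)" by (intro power_increasing) auto
    thus "degree (monom (1::'a) (2^i)) \<le> 2^(r-1)" using degree_monom_le order_trans by blast
  qed simp
  have d2: "card {x. poly p x = 0} \<le> degree p" by (rule card_poly_roots_bound[OF pn])
  have d3: "{x. poly p x = 0} = UNIV" using pe z by auto
  have d4: "(2::nat)^(r-1) < 2^r" by (rule power_strict_increasing) (use assms in auto)
  have "card {x. poly p x = 0} = 2^r" using assms(1) by (simp only: d3)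
  with d1 d2 d4 show False by linarith
qed

definition sg :: "bit \<Rightarrow> int" where "sg b = (if b = 0 then 1 else -1)"

lemma sg_add: "sg (b + c) = sg b * sg c"
  by (cases b; cases c) (auto simp: sg_def)

lemma sg_add1: "sg (b + 1) = - sg b"
  by (cases b) (auto simp: sg_def)

lemma char_sum_zero:
  fixes h :: "'a::{field,finite} \<Rightarrow> bit"
  assumes add: "\<And>x y. h (x + y) = h x + h y" and y: "h y = 1"
  shows "(\<Sum>x\<in>UNIV. sg (h x)) = 0"
proof -
  have "(\<Sum>x\<in>UNIV. sg (h (x + y))) = (\<Sum>x\<in>UNIV. sg (h x))"
    by (rule sum.reindex_bij_witness[where i="\<lambda>x. x - y" and j="\<lambda>x. x + y"]) auto
  moreover have "(\<Sum>x\<in>UNIV. sg (h (x + y))) = - (\<Sum>x\<in>UNIV. sg (h x))"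
    by (simp only: add y sg_add1 sum_negf)
  ultimately show ?thesis by simp
qed

lemma additive_is_trace:
  fixes f :: "'a::{field,finite} \<Rightarrow> bit"
  assumes "CARD('a) = 2 ^ r" "r > 0"
  assumes add: "\<And>x y. f (x + y) = f x + f y"
  shows "\<exists>a. \<forall>x. f x = abs_tr r (a * x)"
proof -
  obtain z :: 'a where z: "abs_tr r z = 1" using abs_tr_nonzero[OF assms(1,2)] by blast
  have f0: "f 0 = 0" using add[of 0 0] by (cases "f 0") auto
  have inner: "(\<Sum>a\<in>UNIV. sg (abs_tr r (a * x))) = (if x = 0 then of_nat CARD('a) else 0)" for x :: 'a
  proof (cases "x = 0")
    case True thus ?thesis using assms by (simp add: abs_tr_0 sg_def)
  next
    case False
    have "(\<Sum>a\<in>UNIV. sg (abs_tr r (a * x))) = 0"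
    proof (rule char_sum_zero)
      show "abs_tr r ((a + b) * x) = abs_tr r (a * x) + abs_tr r (b * x)" for a b
        by (simp add: distrib_right abs_tr_add[OF assms(1,2)])
      show "abs_tr r (z / x * x) = 1" using False z by simp
    qed
    thus ?thesis using False by simp
  qed
  have "(\<Sum>a\<in>UNIV. \<Sum>x\<in>UNIV. sg (f x + abs_tr r (a * x)))
      = (\<Sum>x\<in>UNIV. sg (f x) * (\<Sum>a\<in>UNIV. sg (abs_tr r (a * x))))"
    by (subst sum.swap) (simp only: sg_add sum_distrib_left)
  also have "\<dots> = (\<Sum>x::'a\<in>UNIV. if x = 0 then sg (f 0) * of_nat CARD('a) else 0)"
    unfolding inner by (intro sum.cong refl) auto
  also have "\<dots> = sg (f 0) * of_nat CARD('a)" by simp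
  also have "\<dots> = of_nat CARD('a)" by (simp add: f0 sg_def)
  finally have "(\<Sum>a\<in>UNIV. \<Sum>x\<in>UNIV. sg (f x + abs_tr r (a * x))) \<noteq> 0" by simp
  then obtain a where a: "(\<Sum>x\<in>UNIV. sg (f x + abs_tr r (a * x))) \<noteq> 0"
    by (meson sum.neutral)
  have "\<forall>x. f x + abs_tr r (a * x) = 0"
  proof (rule ccontr)
    assume "\<not> ?thesis"
    then obtain y where "f y + abs_tr r (a * y) \<noteq> 0" by blast
    hence "f y + abs_tr r (a * y) = 1" by simp
    from char_sum_zero[where h="\<lambda>x. f x + abs_tr r (a * x)", OF _ this] a show False
      by (simp del: add_bit_eq_xor add: add distrib_left abs_tr_add[OF assms(1,2)] ac_simps)
  qed
  have "\<forall>x. f x = abs_tr r (a * x)"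
  proof
    fix x show "f x = abs_tr r (a * x)" using \<open>\<forall>x. _\<close>[rule_format, of x]
      by (cases "f x"; cases "abs_tr r (a*x)") auto
  qed
  thus ?thesis by blast
qed

lemma sum_two_split:
  fixes h :: "'n::finite \<Rightarrow> 'a::comm_monoid_add"
  assumes "i0 \<noteq> i1"
  shows "(\<Sum>i\<in>UNIV. h i) = h i0 + h i1 + (\<Sum>i\<in>UNIV - {i0, i1}. h i)"
proof -
  have "UNIV = insert i0 (insert i1 (UNIV - {i0, i1}))" by auto
  hence "(\<Sum>i\<in>UNIV. h i) = (\<Sum>i\<in>insert i0 (insert i1 (UNIV - {i0, i1})). h i)" by simp
  also have "\<dots> = h i0 + h i1 + (\<Sum>i\<in>UNIV - {i0, i1}. h i)" using assms by (simp add: add.assoc)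
  finally show ?thesis .
qed

lemma prod_two_split:
  fixes h :: "'n::finite \<Rightarrow> 'a::comm_monoid_mult"
  assumes "i0 \<noteq> i1"
  shows "(\<Prod>i\<in>UNIV. h i) = h i0 * h i1 * (\<Prod>i\<in>UNIV - {i0, i1}. h i)"
proof -
  have "UNIV = insert i0 (insert i1 (UNIV - {i0, i1}))" by auto
  hence "(\<Prod>i\<in>UNIV. h i) = (\<Prod>i\<in>insert i0 (insert i1 (UNIV - {i0, i1})). h i)" by simp
  also have "\<dots> = h i0 * h i1 * (\<Prod>i\<in>UNIV - {i0, i1}. h i)" using assms by (simp add: mult.assoc)
  finally show ?thesis .
qed

lemma trace_surj:
  fixes x :: "'a::field"
  assumes "CARD('n::finite) \<ge> 2"
  shows "\<exists>g::'a^'n^'n. g \<in> SL \<and> trace g = x"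
proof -
  obtain i0 i1 :: 'n where ne: "i0 \<noteq> i1"
  proof -
    have "1 < card (UNIV::'n set)" using assms by simp
    hence "\<not> (\<forall>a\<in>(UNIV::'n set). \<forall>b\<in>UNIV. a = b)" using card_le_Suc0_iff_eq[of "UNIV::'n set"] by simp
    then obtain a b :: 'n where "a \<noteq> b" by blast
    thus ?thesis using that by blast
  qed
  define y where "y = x - of_nat (CARD('n) - 2)"
  define e where "e = (\<lambda>i j::'n. if i = j then (if i = i0 then y else if i = i1 then 0 else (1::'a))
                      else if i = i0 \<and> j = i1 then 1 else if i = i1 \<and> j = i0 then -1 else 0)"
  define g :: "'a^'n^'n" where "g = (\<chi> i j. e i j)"
  have gij: "g $ i $ j = e i j" for i j by (simp add: g_def)
  have "trace g = e i0 i0 + e i1 i1 + (\<Sum>i\<in>UNIV - {i0, i1}. e i i)"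
    unfolding trace_def gij by (rule sum_two_split[OF ne])
  also have "(\<Sum>i\<in>UNIV - {i0, i1}. e i i) = (\<Sum>i\<in>UNIV - {i0, i1}. 1)"
    by (rule sum.cong) (auto simp: e_def)
  also have "\<dots> = of_nat (CARD('n) - 2)" using ne by (simp add: card_Diff_subset numeral_2_eq_2)
  finally have tr: "trace g = x" using ne by (simp add: e_def y_def)
  define \<tau> where "\<tau> = Transposition.transpose i0 i1"
  have tau: "\<tau> permutes UNIV" unfolding \<tau>_def by (rule permutes_swap_id) auto
  have zero: "(\<Prod>i\<in>UNIV. g $ i $ p i) = 0" if p: "p permutes UNIV" "p \<noteq> \<tau>" for p
  proof (rule ccontr)
    assume "(\<Prod>i\<in>UNIV. g $ i $ p i) \<noteq> 0"
    hence nz: "e i (p i) \<noteq> 0" for i by (simp add: gij)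
    have o: "p i = i" if "i \<noteq> i0" "i \<noteq> i1" for i using nz[of i] that by (auto simp: e_def split: if_splits)
    have p1: "p i1 = i0" using nz[of i1] ne by (auto simp: e_def split: if_splits)
    have "p i0 = i0 \<or> p i0 = i1" using nz[of i0] ne by (auto simp: e_def split: if_splits)
    moreover have "p i0 \<noteq> p i1" using ne permutes_inj[OF p(1)] by (auto dest: injD)
    ultimately have p0: "p i0 = i1" using p1 by auto
    have "p = \<tau>"
    proof
      fix i show "p i = \<tau> i" using o p0 p1 by (cases "i = i0"; cases "i = i1") (auto simp: \<tau>_def)
    qed
    with p show False by simp
  qed
  have "det g = (\<Sum>p\<in>{\<tau>}. of_int (sign p) * (\<Prod>i\<in>UNIV. g $ i $ p i))"
    unfolding det_def
    by (rule sum.mono_neutral_right) (use tau zero in auto)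
  also have "\<dots> = of_int (sign \<tau>) * (g $ i0 $ \<tau> i0 * g $ i1 $ \<tau> i1 * (\<Prod>i\<in>UNIV - {i0, i1}. g $ i $ \<tau> i))"
    by (simp only: sum.empty sum.insert_remove empty_iff finite.emptyI add_0_right Diff_empty empty_Diff prod_two_split[OF ne, of "\<lambda>i. g $ i $ \<tau> i"])
  also have "(\<Prod>i\<in>UNIV - {i0, i1}. g $ i $ \<tau> i) = (\<Prod>i\<in>UNIV - {i0, i1}. 1)"
    by (rule prod.cong) (auto simp: gij e_def \<tau>_def)
  finally have "det g = 1" using ne by (simp add: \<tau>_def sign_swap_id gij e_def)
  thus ?thesis using tr by (auto simp: SL_def)
qed

lemma abs_tr_lin_sum:
  assumes "CARD('a::{field,finite}) = 2 ^ r" "r > 0" "finite S"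
  shows "abs_tr r (\<Sum>g\<in>S. of_bit (u g) * (y g :: 'a)) = (\<Sum>g\<in>S. u g * abs_tr r (y g))"
  using assms(3)
proof (induction S rule: finite_induct)
  case empty thus ?case using assms by (simp add: abs_tr_0)
next
  case (insert x F)
  thus ?case by (simp only: sum.insert[OF insert(1,2)] abs_tr_add[OF assms(1,2)] abs_tr_scal[OF assms(2)] insert.IH)
qed

lemma delta_sum_field:
  assumes "finite S" "h \<in> S"
  shows "(\<Sum>x\<in>S. (of_bit (if x = h then 1 else 0) :: 'b::semiring_1) * t x) = t h"
proof -
  have "(\<Sum>x\<in>S. (of_bit (if x = h then 1 else 0) :: 'b) * t x) = (\<Sum>x\<in>S. if x = h then t x else 0)"
    by (rule sum.cong) auto
  thus ?thesis using assms by simp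
qed

lemma delta_sum_bit:
  assumes "finite S" "h \<in> S"
  shows "(\<Sum>x\<in>S. (if x = h then 1 else 0) * (w x :: bit)) = w h"
proof -
  have "(\<Sum>x\<in>S. (if x = h then 1 else 0) * (w x :: bit)) = (\<Sum>x\<in>S. if x = h then w x else 0)"
    by (rule sum.cong) auto
  thus ?thesis using assms by simp
qed

theorem proposition7:
  fixes s r :: nat
  assumes "s > 0" and "r > 0"
    and "CARD('n::finite) = 2 ^ s"
    and "CARD('a::{field,finite}) = 2 ^ r"
  shows "bij_betw (cmap r :: 'a \<Rightarrow> ('a^'n^'n \<Rightarrow> bit)) UNIV code_C_perp
       \<and> (\<forall>a b. (cmap r (a + b) :: 'a^'n^'n \<Rightarrow> bit) = (\<lambda>g. cmap r a g + cmap r b g))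
       \<and> (\<forall>(k::bit) a. (cmap r (of_bit k * a) :: 'a^'n^'n \<Rightarrow> bit) = (\<lambda>g. k * cmap r a g))"
proof -
  note A = assms(4,2)
  have c: "(1::'a) + 1 = 0" by (rule char2[OF A])
  have dbl: "t + t = (0::'a)" for t
  proof -
    have "t + t = (1 + 1) * t" by (simp add: algebra_simps)
    thus ?thesis using c by simp
  qed
  have "(2::nat) ^ 1 \<le> 2 ^ s" using assms(1) by (intro power_increasing) auto
  hence cardn: "CARD('n) \<ge> 2" using assms(3) by simp
  have finSL: "finite (SL :: ('a^'n^'n) set)" by simp
  have lin1: "\<forall>a b. (cmap r (a + b) :: 'a^'n^'n \<Rightarrow> bit) = (\<lambda>g. cmap r a g + cmap r b g)"
    by (auto simp: cmap_def distrib_right abs_tr_add[OF A] simp del: add_bit_eq_xor)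
  have lin2: "\<forall>(k::bit) a. (cmap r (of_bit k * a) :: 'a^'n^'n \<Rightarrow> bit) = (\<lambda>g. k * cmap r a g)"
  proof (intro allI ext)
    fix k :: bit and a :: 'a and g :: "'a^'n^'n"
    show "cmap r (of_bit k * a) g = k * cmap r a g"
      using abs_tr_scal[OF assms(2), of k "a * trace g"]
      by (simp add: cmap_def mult.assoc del: mult_bit_eq_and)
  qed
  have inj: "inj (cmap r :: 'a \<Rightarrow> ('a^'n^'n \<Rightarrow> bit))"
  proof (rule injI, rule ccontr)
    fix a b :: 'a
    assume eq: "(cmap r a :: 'a^'n^'n \<Rightarrow> bit) = cmap r b" and ne: "a \<noteq> b"
    have dnz: "a + b \<noteq> 0"
    proof
      assume "a + b = 0"
      hence "a = - b" by (simp add: eq_neg_iff_add_eq_0)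
      moreover have "- b = b" using dbl[of b] by (simp add: neg_eq_iff_add_eq_0)
      ultimately show False using ne by simp
    qed
    obtain z :: 'a where z: "abs_tr r z = 1" using abs_tr_nonzero[OF A] by blast
    obtain g :: "'a^'n^'n" where g: "g \<in> SL" "trace g = z / (a + b)"
      using trace_surj[OF cardn] by blast
    have "cmap r a g = cmap r b g" using eq by simp
    hence e: "abs_tr r (a * trace g) = abs_tr r (b * trace g)" using g by (simp add: cmap_def)
    have "abs_tr r ((a + b) * trace g) = abs_tr r (a * trace g) + abs_tr r (b * trace g)"
      by (simp add: distrib_right abs_tr_add[OF A] del: add_bit_eq_xor)
    also have "\<dots> = 0" using e by simp
    finally show False using z g dnz by simp
  qed
  have sub1: "(cmap r :: 'a \<Rightarrow> ('a^'n^'n \<Rightarrow> bit)) ` UNIV \<subseteq> code_C_perp"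
  proof safe
    fix a :: 'a
    show "(cmap r a :: 'a^'n^'n \<Rightarrow> bit) \<in> code_C_perp"
      unfolding code_C_perp_def
    proof (intro CollectI conjI ballI)
      show "(cmap r a :: 'a^'n^'n \<Rightarrow> bit) \<in> words" by (simp add: words_def cmap_def)
      fix u :: "'a^'n^'n \<Rightarrow> bit" assume u: "u \<in> code_C"
      hence u0: "(\<Sum>g\<in>SL. of_bit (u g) * trace g) = (0::'a)" by (simp add: code_C_def)
      have "(\<Sum>g\<in>SL. u g * cmap r a g) = (\<Sum>g\<in>SL. u g * abs_tr r (a * trace g))"
        by (rule sum.cong) (auto simp: cmap_def)
      also have "\<dots> = abs_tr r (\<Sum>g\<in>SL. of_bit (u g) * (a * trace g))"
        by (rule abs_tr_lin_sum[OF A finSL, symmetric])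
      also have "(\<Sum>g\<in>SL. of_bit (u g) * (a * trace g)) = a * (\<Sum>g\<in>SL. of_bit (u g) * trace g)"
        unfolding sum_distrib_left by (rule sum.cong[OF refl]) (rule mult.left_commute)
      also have "\<dots> = 0" using u0 by simp
      finally show "(\<Sum>g\<in>SL. u g * cmap r a g) = 0" using assms(2) by (simp add: abs_tr_0)
    qed
  qed
  have sub2: "code_C_perp \<subseteq> (cmap r :: 'a \<Rightarrow> ('a^'n^'n \<Rightarrow> bit)) ` UNIV"
  proof
    fix w :: "'a^'n^'n \<Rightarrow> bit"
    assume w: "w \<in> code_C_perp"
    hence ww: "w \<in> words" and wp: "\<And>u. u \<in> code_C \<Longrightarrow> (\<Sum>g\<in>SL. u g * w g) = 0"
      by (auto simp: code_C_perp_def)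
    define \<delta> where "\<delta> = (\<lambda>(h::'a^'n^'n) x. if x = h then (1::bit) else 0)"
    have three: "w h1 + w h2 + w h3 = 0"
      if h: "h1 \<in> SL" "h2 \<in> SL" "h3 \<in> SL" and t: "trace h1 + trace h2 + trace h3 = 0" for h1 h2 h3
    proof -
      define u where "u = (\<lambda>x. \<delta> h1 x + \<delta> h2 x + \<delta> h3 x)"
      have "u \<in> words" using h by (auto simp: words_def u_def \<delta>_def)
      moreover have "(\<Sum>x\<in>SL. of_bit (u x) * trace x) = (0::'a)"
      proof -
        have "(\<Sum>x\<in>SL. of_bit (u x) * trace x) = (\<Sum>x\<in>SL. of_bit (\<delta> h1 x) * trace x)
             + (\<Sum>x\<in>SL. of_bit (\<delta> h2 x) * trace x) + (\<Sum>x\<in>SL. (of_bit (\<delta> h3 x) :: 'a) * trace x)"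
          unfolding u_def by (simp only: of_bit_add_char2[OF c] distrib_right sum.distrib)
        also have "\<dots> = trace h1 + trace h2 + trace h3"
          unfolding \<delta>_def using h finSL by (simp only: delta_sum_field)
        finally show ?thesis using t by simp
      qed
      ultimately have "u \<in> code_C" by (simp add: code_C_def)
      hence "(\<Sum>x\<in>SL. u x * w x) = 0" by (rule wp)
      moreover have "(\<Sum>x\<in>SL. u x * w x) = (\<Sum>x\<in>SL. \<delta> h1 x * w x) + (\<Sum>x\<in>SL. \<delta> h2 x * w x)
             + (\<Sum>x\<in>SL. \<delta> h3 x * w x)"
        unfolding u_def by (simp only: distrib_right sum.distrib)
      moreover have "\<dots> = w h1 + w h2 + w h3"
        unfolding \<delta>_def using h finSL by (simp only: delta_sum_bit)
      ultimately show ?thesis by simp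
    qed
    define rep where "rep = (\<lambda>x::'a. SOME g::'a^'n^'n. g \<in> SL \<and> trace g = x)"
    have rep: "rep x \<in> SL \<and> trace (rep x) = x" for x
      unfolding rep_def by (rule someI_ex) (rule trace_surj[OF cardn])
    define f where "f = (\<lambda>x. w (rep x))"
    have f0: "f 0 = 0"
      using three[of "rep 0" "rep 0" "rep 0"] rep[of 0] by (simp add: f_def)
    have fadd: "f (x + y) = f x + f y" for x y
    proof -
      have "trace (rep x) + trace (rep y) + trace (rep (x + y)) = 0"
        using rep dbl[of "x+y"] by (simp add: add.assoc)
      hence "f x + f y + f (x + y) = 0" using three rep unfolding f_def by blast
      thus ?thesis by (cases "f x"; cases "f y"; cases "f (x+y)") auto
    qed
    have wf: "w g = f (trace g)" if g: "g \<in> SL" for g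
    proof -
      have "trace g + trace (rep (trace g)) + trace (rep 0) = 0"
        using rep dbl[of "trace g"] by simp
      hence "w g + f (trace g) + f 0 = 0" using three g rep unfolding f_def by blast
      thus ?thesis using f0 by (cases "w g"; cases "f (trace g)") auto
    qed
    obtain a where a: "\<forall>x. f x = abs_tr r (a * x)" using additive_is_trace[OF A fadd] by blast
    have "w = cmap r a"
    proof
      fix g :: "'a^'n^'n"
      show "w g = cmap r a g"
      proof (cases "g \<in> SL")
        case True thus ?thesis using wf a by (simp add: cmap_def)
      next
        case False thus ?thesis using ww by (simp add: cmap_def words_def)
      qed
    qed
    thus "w \<in> (cmap r :: 'a \<Rightarrow> ('a^'n^'n \<Rightarrow> bit)) ` UNIV" by blast
  qed
  have "bij_betw (cmap r :: 'a \<Rightarrow> ('a^'n^'n \<Rightarrow> bit)) UNIV code_C_perp"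
    unfolding bij_betw_def using inj sub1 sub2 by blast
  with lin1 lin2 show ?thesis by blast
qed

end
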